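(* Let $G$ be a triangle-free graph. If $G\in\mathcal U$, then no vertex of $G$ is adjacent to more than one support vertex.
   Context: All graphs are finite and simple. A set $P\subseteq V(G)$ is an open packing if no two distinct vertices of $P$ have a common neighbor; it is maximal if maximal under inclusion among open packings. $\rho^o(G)$ is the maximum size of an open packing and $\rho^o_L(G)$ the minimum size of a maximal open packing; $\mathcal U$ is the class of graphs with $\rho^o_L(G)=\rho^o(G)$. A leaf is a vertex of degree $1$; a support vertex is a vertex adjacent to at least one leaf. *)

theory Defs
  imports Main
begin

definition simple_graph :: "'a set \<Rightarrow> ('a \<Rightarrow> 'a \<Rightarrow> bool) \<Rightarrow> bool" where
  "simple_graph V E \<longleftrightarrow> finite V \<and> (\<forall>u v. E u v \<longrightarrow> u \<in> V \<and> v \<in> V)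
     \<and> (\<forall>u v. E u v \<longrightarrow> E v u) \<and> (\<forall>v. \<not> E v v)"

definition nbr :: "'a set \<Rightarrow> ('a \<Rightarrow> 'a \<Rightarrow> bool) \<Rightarrow> 'a \<Rightarrow> 'a set" where
  "nbr V E v = {u \<in> V. E v u}"

definition triangle_free :: "'a set \<Rightarrow> ('a \<Rightarrow> 'a \<Rightarrow> bool) \<Rightarrow> bool" where
  "triangle_free V E \<longleftrightarrow> \<not> (\<exists>x\<in>V. \<exists>y\<in>V. \<exists>z\<in>V. E x y \<and> E y z \<and> E x z)"

definition open_packing :: "'a set \<Rightarrow> ('a \<Rightarrow> 'a \<Rightarrow> bool) \<Rightarrow> 'a set \<Rightarrow> bool" where
  "open_packing V E P \<longleftrightarrow> P \<subseteq> V \<and>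
     (\<forall>x\<in>P. \<forall>y\<in>P. x \<noteq> y \<longrightarrow> nbr V E x \<inter> nbr V E y = {})"

definition maximal_open_packing :: "'a set \<Rightarrow> ('a \<Rightarrow> 'a \<Rightarrow> bool) \<Rightarrow> 'a set \<Rightarrow> bool" where
  "maximal_open_packing V E P \<longleftrightarrow> open_packing V E P \<and>
     (\<forall>Q. open_packing V E Q \<and> P \<subseteq> Q \<longrightarrow> Q = P)"

definition rho_o :: "'a set \<Rightarrow> ('a \<Rightarrow> 'a \<Rightarrow> bool) \<Rightarrow> nat" where
  "rho_o V E = Max (card ` {P. open_packing V E P})"

definition rho_oL :: "'a set \<Rightarrow> ('a \<Rightarrow> 'a \<Rightarrow> bool) \<Rightarrow> nat" where
  "rho_oL V E = Min (card ` {P. maximal_open_packing V E P})"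

definition in_U :: "'a set \<Rightarrow> ('a \<Rightarrow> 'a \<Rightarrow> bool) \<Rightarrow> bool" where
  "in_U V E \<longleftrightarrow> rho_oL V E = rho_o V E"

definition leaf :: "'a set \<Rightarrow> ('a \<Rightarrow> 'a \<Rightarrow> bool) \<Rightarrow> 'a \<Rightarrow> bool" where
  "leaf V E v \<longleftrightarrow> v \<in> V \<and> card (nbr V E v) = 1"

definition support_vertex :: "'a set \<Rightarrow> ('a \<Rightarrow> 'a \<Rightarrow> bool) \<Rightarrow> 'a \<Rightarrow> bool" where
  "support_vertex V E v \<longleftrightarrow> v \<in> V \<and> (\<exists>u \<in> nbr V E v. leaf V E u)"

end

theory Submission
  imports Defs
begin

lemma leaf_nbr:
  assumes "simple_graph V E" "leaf V E l" "s \<in> nbr V E l"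
  shows "nbr V E l = {s}"
proof -
  have "card (nbr V E l) = 1" using assms(2) by (simp add: leaf_def)
  then obtain x where "nbr V E l = {x}" by (rule card_1_singletonE)
  thus ?thesis using assms(3) by auto
qed

theorem lemma1:
  fixes V :: "'a set" and E :: "'a \<Rightarrow> 'a \<Rightarrow> bool"
  assumes "simple_graph V E"
    and "triangle_free V E"
    and "in_U V E"
  shows "\<forall>v\<in>V. card {u \<in> nbr V E v. support_vertex V E u} \<le> 1"
proof (rule ccontr)
  have G: "finite V" "\<And>u w. E u w \<Longrightarrow> u \<in> V \<and> w \<in> V" "\<And>u w. E u w \<Longrightarrow> E w u" "\<And>w. \<not> E w w"
    using assms(1) unfolding simple_graph_def by blast+
  assume "\<not> ?thesis"
  then obtain v where vV: "v \<in> V" and c: "\<not> card {u \<in> nbr V E v. support_vertex V E u} \<le> 1" by blast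
  have fin: "finite {u \<in> nbr V E v. support_vertex V E u}" using G(1) by (simp add: nbr_def)
  from c fin obtain s1 s2 where s: "s1 \<in> nbr V E v" "support_vertex V E s1" "s2 \<in> nbr V E v"
    "support_vertex V E s2" "s1 \<noteq> s2"
    using card_le_Suc0_iff_eq[OF fin] by auto
  obtain l1 where l1: "l1 \<in> nbr V E s1" "leaf V E l1" using s(2) unfolding support_vertex_def by blast
  obtain l2 where l2: "l2 \<in> nbr V E s2" "leaf V E l2" using s(4) unfolding support_vertex_def by blast
  have n1: "nbr V E l1 = {s1}"
    by (rule leaf_nbr[OF assms(1) l1(2)]) (use l1(1) s(1) G(2)[of s1 l1] G(3)[of s1 l1] in \<open>simp add: nbr_def\<close>)
  have n2: "nbr V E l2 = {s2}"
    by (rule leaf_nbr[OF assms(1) l2(2)]) (use l2(1) s(3) G(2)[of s2 l2] G(3)[of s2 l2] in \<open>simp add: nbr_def\<close>)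
  define S where "S = {P. open_packing V E P \<and> v \<in> P}"
  have finS: "finite S" unfolding S_def open_packing_def using G(1)
    by (rule finite_subset[rotated, OF finite_Pow_iff[THEN iffD2]]) auto
  have "{v} \<in> S" using vV by (auto simp: S_def open_packing_def)
  hence neS: "S \<noteq> {}" by blast
  define m where "m = Max (card ` S)"
  have "m \<in> card ` S" unfolding m_def using finS neS by simp
  then obtain Q where QS: "Q \<in> S" and cQ: "card Q = m" by auto
  have QV: "Q \<subseteq> V" and Qop: "open_packing V E Q" and vQ: "v \<in> Q" using QS by (auto simp: S_def open_packing_def)
  have finQ: "finite Q" using QV G(1) finite_subset by blast
  have maxQ: "maximal_open_packing V E Q"
    unfolding maximal_open_packing_def
  proof (intro conjI allI impI)
    show "open_packing V E Q" by fact
    fix R assume R: "open_packing V E R \<and> Q \<subseteq> R"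
    hence RS: "R \<in> S" using vQ by (auto simp: S_def)
    have "card R \<le> m" unfolding m_def using finS RS by simp
    moreover have "finite R" using R G(1) finite_subset unfolding open_packing_def by blast
    ultimately show "R = Q" using R cQ card_subset_eq[of R Q] card_mono[of R Q] by force
  qed
  have finM: "finite {P. maximal_open_packing V E P}"
    by (rule finite_subset[of _ "Pow V"]) (auto simp: maximal_open_packing_def open_packing_def G(1))
  have finO: "finite {P. open_packing V E P}"
    by (rule finite_subset[of _ "Pow V"]) (auto simp: open_packing_def G(1))
  have L: "rho_oL V E \<le> card Q" unfolding rho_oL_def using finM maxQ by simp
  define Q' where "Q' = (Q - {v}) \<union> {l1, l2}"
  have s1v: "s1 \<in> nbr V E v" "s2 \<in> nbr V E v" using s by auto
  have l1Q: "l1 \<notin> Q"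
  proof
    assume "l1 \<in> Q"
    have "l1 \<noteq> v" using n1 s1v s(5) by auto
    then have "nbr V E l1 \<inter> nbr V E v = {}" using Qop \<open>l1 \<in> Q\<close> vQ by (auto simp: open_packing_def)
    thus False using n1 s1v by auto
  qed
  have l2Q: "l2 \<notin> Q"
  proof
    assume "l2 \<in> Q"
    have "l2 \<noteq> v" using n2 s1v s(5) by auto
    then have "nbr V E l2 \<inter> nbr V E v = {}" using Qop \<open>l2 \<in> Q\<close> vQ by (auto simp: open_packing_def)
    thus False using n2 s1v by auto
  qed
  have l12: "l1 \<noteq> l2" using n1 n2 s(5) by auto
  have l1V: "l1 \<in> V" "l2 \<in> V" using l1 l2 by (auto simp: leaf_def)
  have Q'op: "open_packing V E Q'"
    unfolding open_packing_def
  proof (intro conjI ballI impI)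
    show "Q' \<subseteq> V" using QV l1V by (auto simp: Q'_def)
    fix x y assume xy: "x \<in> Q'" "y \<in> Q'" "x \<noteq> y"
    have key: "nbr V E a \<inter> nbr V E b = {}" if "a \<in> {l1,l2}" "b \<in> Q - {v}" for a b
    proof -
      have "nbr V E b \<inter> nbr V E v = {}" using Qop that(2) vQ by (auto simp: open_packing_def)
      thus ?thesis using that(1) n1 n2 s1v by auto
    qed
    show "nbr V E x \<inter> nbr V E y = {}"
    proof (cases "x \<in> {l1,l2}")
      case True
      show ?thesis
      proof (cases "y \<in> {l1,l2}")
        case True
        with \<open>x \<in> {l1,l2}\<close> xy(3) show ?thesis using n1 n2 s(5) by auto
      next
        case False
        hence "y \<in> Q - {v}" using xy(2) by (auto simp: Q'_def)
        thus ?thesis using key True by blast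
      qed
    next
      case False
      hence xQ: "x \<in> Q - {v}" using xy(1) by (auto simp: Q'_def)
      show ?thesis
      proof (cases "y \<in> {l1,l2}")
        case True
        thus ?thesis using key xQ by blast
      next
        case False
        hence "y \<in> Q - {v}" using xy(2) by (auto simp: Q'_def)
        thus ?thesis using xQ xy(3) Qop by (auto simp: open_packing_def)
      qed
    qed
  qed
  have cQ': "card Q' = card Q + 1"
  proof -
    have "card Q' = card (Q - {v}) + card {l1,l2}"
      unfolding Q'_def by (rule card_Un_disjoint) (use finQ l1Q l2Q in auto)
    also have "\<dots> = card Q - 1 + 2" using vQ finQ l12 by simp
    finally have "card Q' = card Q - 1 + 2" .
    moreover have "card Q > 0" using vQ finQ card_gt_0_iff by blast
    ultimately show ?thesis by linarith
  qed
  have "card Q' \<le> rho_o V E" unfolding rho_o_def using finO Q'op by simp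
  with L cQ' assms(3) show False by (simp add: in_U_def)
qed

end
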